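(* Let $\mathcal{A}=\{A_1,\dots,A_m\}$ be a bimodal collection of pairwise disjoint subsets of a finite abelian group $G$. Suppose that for some $i$ the set $A_i$ is a coset of its internal difference group $H_i$. Let $A_i^1,\dots,A_i^r$ be pairwise disjoint subsets whose union is $A_i$, with internal difference groups $H_i^1,\dots,H_i^r$ respectively, such that for each $j=1,\dots,r$ the set $A_i^j$ is a coset of $H_i^j$. Then the collection $\{A_1,\dots,A_{i-1},A_i^1,\dots,A_i^r,A_{i+1},\dots,A_m\}$ has the bimodal property.
   Context: $G$ is a finite abelian group written additively. The internal difference group of a subset $S\subseteq G$ is the subgroup of $G$ generated by all elements $x-y$ with $x,y\in S$. A collection $\{A_1,\dots,A_m\}$ of pairwise disjoint subsets of $G$ is bimodal (has the bimodal property) if for every $i$ and every $\delta\in G\setminus\{0\}$, the number $N_i(\delta)$ of pairs $(a,b)$ with $a\in A_i$, $b\in A_j$ for some $j\neq i$, and $a-b=\delta$, satisfies $N_i(\delta)\in\{0,|A_i|\}$. *)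

theory Defs
  imports Main
begin

definition is_subgroup :: "'a::ab_group_add set \<Rightarrow> bool" where
  "is_subgroup H \<longleftrightarrow> 0 \<in> H \<and> (\<forall>x\<in>H. \<forall>y\<in>H. x + y \<in> H) \<and> (\<forall>x\<in>H. - x \<in> H)"

definition diff_group :: "'a::ab_group_add set \<Rightarrow> 'a set" where
  "diff_group S = \<Inter> {H. is_subgroup H \<and> {x - y | x y. x \<in> S \<and> y \<in> S} \<subseteq> H}"

definition is_coset_of :: "'a::ab_group_add set \<Rightarrow> 'a set \<Rightarrow> bool" where
  "is_coset_of A H \<longleftrightarrow> (\<exists>a. A = (\<lambda>h. a + h) ` H)"

definition Ncount :: "'i set \<Rightarrow> ('i \<Rightarrow> 'a::ab_group_add set) \<Rightarrow> 'i \<Rightarrow> 'a \<Rightarrow> nat" where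
  "Ncount I A i \<delta> = card {(a, b). a \<in> A i \<and> (\<exists>j\<in>I. j \<noteq> i \<and> b \<in> A j) \<and> a - b = \<delta>}"

definition bimodal :: "'i set \<Rightarrow> ('i \<Rightarrow> 'a::ab_group_add set) \<Rightarrow> bool" where
  "bimodal I A \<longleftrightarrow> (\<forall>i\<in>I. \<forall>j\<in>I. i \<noteq> j \<longrightarrow> A i \<inter> A j = {}) \<and>
     (\<forall>i\<in>I. \<forall>\<delta>. \<delta> \<noteq> 0 \<longrightarrow> Ncount I A i \<delta> = 0 \<or> Ncount I A i \<delta> = card (A i))"

end

theory Submission
  imports Defs
begin

lemma Ncount_alt: "Ncount I A k \<delta> = card {a \<in> A k. \<exists>l\<in>I. l \<noteq> k \<and> a - \<delta> \<in> A l}"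
proof -
  have "{(a, b). a \<in> A k \<and> (\<exists>j\<in>I. j \<noteq> k \<and> b \<in> A j) \<and> a - b = \<delta>}
        = (\<lambda>a. (a, a - \<delta>)) ` {a \<in> A k. \<exists>l\<in>I. l \<noteq> k \<and> a - \<delta> \<in> A l}"
    by (auto simp: image_iff algebra_simps)
  then show ?thesis unfolding Ncount_def by (simp add: card_image inj_on_def)
qed

lemma diff_group_sub: "is_subgroup (diff_group S)"
  unfolding diff_group_def is_subgroup_def by auto

lemma diff_in: "x \<in> S \<Longrightarrow> y \<in> S \<Longrightarrow> x - y \<in> diff_group S"
  unfolding diff_group_def by blast

lemma coset_closed:
  assumes "is_coset_of A (diff_group A)" "a \<in> A" "d \<in> diff_group A"
  shows "a - d \<in> A"
proof -
  obtain c where c: "A = (\<lambda>h. c + h) ` diff_group A" using assms(1) unfolding is_coset_of_def by blast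
  then obtain h where h: "h \<in> diff_group A" "a = c + h" using assms(2) by blast
  have "h + - d \<in> diff_group A" using diff_group_sub h assms(3) unfolding is_subgroup_def by blast
  moreover have "a - d = c + (h + - d)" using h by (simp add: algebra_simps)
  ultimately show ?thesis using c by blast
qed

lemma empty_or_all:
  assumes "finite (X::'a set)" "S \<subseteq> X" "S = {} \<or> S = X"
  shows "card S = 0 \<or> card S = card X"
  using assms by auto

theorem theorem2p12:
  fixes I :: "'i set" and A :: "'i \<Rightarrow> 'g::{ab_group_add, finite} set"
    and J :: "'j set" and B :: "'j \<Rightarrow> 'g set" and i :: 'i
  assumes "finite I" and "bimodal I A" and "i \<in> I"
    and "is_coset_of (A i) (diff_group (A i))"
    and "finite J"
    and "\<forall>j\<in>J. \<forall>k\<in>J. j \<noteq> k \<longrightarrow> B j \<inter> B k = {}"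
    and "(\<Union>j\<in>J. B j) = A i"
    and "\<forall>j\<in>J. is_coset_of (B j) (diff_group (B j))"
  shows "bimodal ((I - {i}) <+> J) (case_sum A B)"
proof -
  have disjA: "\<And>k l. k \<in> I \<Longrightarrow> l \<in> I \<Longrightarrow> k \<noteq> l \<Longrightarrow> A k \<inter> A l = {}"
    using assms(2) unfolding bimodal_def by blast
  have bimA: "\<And>k \<delta>. k \<in> I \<Longrightarrow> \<delta> \<noteq> 0 \<Longrightarrow> Ncount I A k \<delta> = 0 \<or> Ncount I A k \<delta> = card (A k)"
    using assms(2) unfolding bimodal_def by blast
  have BsubA: "\<And>j. j \<in> J \<Longrightarrow> B j \<subseteq> A i" using assms(7) by blast
  define U where "U = (I - {i}) <+> J"
  have part1: "\<forall>x\<in>U. \<forall>y\<in>U. x \<noteq> y \<longrightarrow> case_sum A B x \<inter> case_sum A B y = {}"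
  proof (intro ballI impI)
    fix x y assume x: "x \<in> U" and y: "y \<in> U" and xy: "x \<noteq> y"
    show "case_sum A B x \<inter> case_sum A B y = {}"
      using x y xy disjA[of _ i] disjA assms(6) BsubA assms(3) unfolding U_def
      by (auto elim!: PlusE) blast+
  qed
  have part2: "Ncount U (case_sum A B) x \<delta> = 0 \<or> Ncount U (case_sum A B) x \<delta> = card (case_sum A B x)"
    if x: "x \<in> U" and d: "\<delta> \<noteq> 0" for x \<delta>
  proof (cases x)
    case (Inl k)
    have k: "k \<in> I" "k \<noteq> i" using x Inl unfolding U_def by auto
    have "{a \<in> case_sum A B x. \<exists>l\<in>U. l \<noteq> x \<and> a - \<delta> \<in> case_sum A B l}
        = {a \<in> A k. \<exists>l\<in>I. l \<noteq> k \<and> a - \<delta> \<in> A l}"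
    proof (intro set_eqI iffI)
      fix a assume "a \<in> {a \<in> case_sum A B x. \<exists>l\<in>U. l \<noteq> x \<and> a - \<delta> \<in> case_sum A B l}"
      then obtain l where a: "a \<in> A k" "l \<in> U" "l \<noteq> x" "a - \<delta> \<in> case_sum A B l" using Inl by auto
      show "a \<in> {a \<in> A k. \<exists>l\<in>I. l \<noteq> k \<and> a - \<delta> \<in> A l}"
      proof (cases l)
        case (Inl l')
        then show ?thesis using a Inl \<open>x = Inl k\<close> unfolding U_def by auto
      next
        case (Inr j')
        then have "a - \<delta> \<in> A i" using a BsubA unfolding U_def by auto
        then show ?thesis using a k assms(3) by auto
      qed
    next
      fix a assume "a \<in> {a \<in> A k. \<exists>l\<in>I. l \<noteq> k \<and> a - \<delta> \<in> A l}"
      then obtain l where a: "a \<in> A k" "l \<in> I" "l \<noteq> k" "a - \<delta> \<in> A l" by auto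
      show "a \<in> {a \<in> case_sum A B x. \<exists>l\<in>U. l \<noteq> x \<and> a - \<delta> \<in> case_sum A B l}"
      proof (cases "l = i")
        case True
        then obtain j' where "j' \<in> J" "a - \<delta> \<in> B j'" using a assms(7) by auto
        then show ?thesis using a Inl unfolding U_def by (auto intro!: bexI[of _ "Inr j'"])
      next
        case False
        then show ?thesis using a Inl unfolding U_def by (auto intro!: bexI[of _ "Inl l"])
      qed
    qed
    then show ?thesis using bimA[OF k(1) d] Inl by (simp add: Ncount_alt)
  next
    case (Inr j)
    have j: "j \<in> J" using x Inr unfolding U_def by auto
    define S where "S = {a \<in> B j. \<exists>l\<in>U. l \<noteq> x \<and> a - \<delta> \<in> case_sum A B l}"
    have "S = {} \<or> S = B j"
    proof (cases "\<delta> \<in> diff_group (A i)")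
      case True
      have inAi: "a - \<delta> \<in> A i" if "a \<in> B j" for a
        using coset_closed[OF assms(4) _ True] that BsubA[OF j] by blast
      have Siff: "a \<in> S \<longleftrightarrow> a - \<delta> \<notin> B j" if a: "a \<in> B j" for a
      proof
        assume "a \<in> S"
        then obtain l where l: "l \<in> U" "l \<noteq> x" "a - \<delta> \<in> case_sum A B l" unfolding S_def by auto
        show "a - \<delta> \<notin> B j"
        proof (cases l)
          case (Inl l')
          then have "l' \<in> I" "l' \<noteq> i" using l unfolding U_def by auto
          then show ?thesis using disjA[of l' i] l Inl inAi[OF a] assms(3) by auto
        next
          case (Inr j')
          then have "j' \<in> J" "j' \<noteq> j" using l Inr \<open>x = Inr j\<close> unfolding U_def by auto
          then show ?thesis using assms(6) j l Inr by auto
        qed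
      next
        assume nb: "a - \<delta> \<notin> B j"
        obtain j' where "j' \<in> J" "a - \<delta> \<in> B j'" using inAi[OF a] assms(7) by auto
        then show "a \<in> S" unfolding S_def using a nb \<open>x = Inr j\<close> unfolding U_def
          by (auto intro!: bexI[of _ "Inr j'"])
      qed
      show ?thesis
      proof (cases "\<delta> \<in> diff_group (B j)")
        case True
        have "a - \<delta> \<in> B j" if "a \<in> B j" for a
          using coset_closed[of "B j" a \<delta>] assms(8) j True that by blast
        then have "S = {}" using Siff unfolding S_def by auto
        then show ?thesis by blast
      next
        case False
        have "a - \<delta> \<notin> B j" if "a \<in> B j" for a
          using diff_in[of a "B j" "a - \<delta>"] False that by auto
        then have "S = B j" using Siff unfolding S_def by auto
        then show ?thesis by blast
      qed
    next
      case False
      define T where "T = {a \<in> A i. \<exists>l\<in>I. l \<noteq> i \<and> a - \<delta> \<in> A l}"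
      have "card T = 0 \<or> card T = card (A i)" using bimA[OF assms(3) d] by (simp add: Ncount_alt T_def)
      then have T: "T = {} \<or> T = A i"
      proof
        assume "card T = 0" then show ?thesis by simp
      next
        assume c: "card T = card (A i)"
        have "T \<subseteq> A i" unfolding T_def by blast
        then show ?thesis using card_subset_eq[OF finite _ c] by blast
      qed
      have nAi: "a - \<delta> \<notin> A i" if "a \<in> B j" for a
        using diff_in[of a "A i" "a - \<delta>"] False that BsubA[OF j] by auto
      have "S = B j \<inter> T"
      proof (intro set_eqI iffI)
        fix a assume "a \<in> S"
        then obtain l where a: "a \<in> B j" "l \<in> U" "l \<noteq> x" "a - \<delta> \<in> case_sum A B l" unfolding S_def by auto
        show "a \<in> B j \<inter> T"
        proof (cases l)
          case (Inl l')
          then have "l' \<in> I" "l' \<noteq> i" using a unfolding U_def by auto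
          then show ?thesis using a Inl BsubA[OF j] unfolding T_def by auto
        next
          case (Inr j')
          then have "j' \<in> J" using a unfolding U_def by auto
          then show ?thesis using a Inr BsubA nAi by auto
        qed
      next
        fix a assume "a \<in> B j \<inter> T"
        then obtain l where a: "a \<in> B j" "l \<in> I" "l \<noteq> i" "a - \<delta> \<in> A l" unfolding T_def by auto
        then show "a \<in> S" unfolding S_def using \<open>x = Inr j\<close> unfolding U_def
          by (auto intro!: bexI[of _ "Inl l"])
      qed
      then show ?thesis using T BsubA[OF j] by blast
    qed
    then have cS: "card S = 0 \<or> card S = card (B j)" by auto
    have "Ncount U (case_sum A B) x \<delta> = card S" unfolding Ncount_alt S_def using Inr by simp
    then show ?thesis using cS Inr by simp
  qed
  have "bimodal U (case_sum A B)"
    unfolding bimodal_def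
  proof (intro conjI)
    show "\<forall>x\<in>U. \<forall>y\<in>U. x \<noteq> y \<longrightarrow> case_sum A B x \<inter> case_sum A B y = {}" by (rule part1)
    show "\<forall>x\<in>U. \<forall>\<delta>. \<delta> \<noteq> 0 \<longrightarrow> Ncount U (case_sum A B) x \<delta> = 0 \<or> Ncount U (case_sum A B) x \<delta> = card (case_sum A B x)"
      using part2 by blast
  qed
  then show ?thesis unfolding U_def .
qed

end
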